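(* There are infinitely many SP twins, i.e. infinitely many natural numbers $m$ such that both $m$ and $m+1$ are SP numbers.
   Context: A Square-Prime (SP) number is a positive integer of the form $p a^2$ where $p$ is a prime and $a \ge 2$ is a natural number (i.e. $a \neq 1$). An SP twin is a pair of consecutive natural numbers $m, m+1$ that are both SP numbers (e.g. $27 = 3\cdot 9$ and $28 = 7 \cdot 4$). *)

theory Defs
  imports "HOL-Computational_Algebra.Primes"
begin

definition SP :: "nat \<Rightarrow> bool" where
  "SP n \<longleftrightarrow> (\<exists>p a. prime p \<and> a \<ge> 2 \<and> n = p * a ^ 2)"

end

theory Submission
  imports Defs "HOL-Library.Infinite_Set"
begin

fun pell :: "nat \<Rightarrow> nat \<times> nat" where
  "pell 0 = (11, 9)"
| "pell (Suc n) = (5 * fst (pell n) + 6 * snd (pell n), 4 * fst (pell n) + 5 * snd (pell n))"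

lemma pell_prop: "3 * (snd (pell n))^2 = 2 * (fst (pell n))^2 + 1 \<and> fst (pell n) \<ge> n + 11 \<and> snd (pell n) \<ge> 2"
proof (induction n)
  case 0
  then show ?case by simp
next
  case (Suc n)
  obtain x y where xy: "pell n = (x, y)" by (cases "pell n")
  have h: "3 * y^2 = 2 * x^2 + 1" "x \<ge> n + 11" "y \<ge> 2" using Suc xy by auto
  have "3 * (4 * x + 5 * y)^2 = 2 * (5 * x + 6 * y)^2 + 3 * y^2 - 2 * x^2"
    by (simp add: power2_eq_square algebra_simps)
  then show ?case using h xy by simp
qed

theorem mainTheorem4:
  shows "infinite {m :: nat. SP m \<and> SP (m + 1)}"
proof -
  have "\<exists>m. m > N \<and> m \<in> {m :: nat. SP m \<and> SP (m + 1)}" for N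
  proof -
    obtain x y where xy: "pell N = (x, y)" by (cases "pell N")
    have h: "3 * y^2 = 2 * x^2 + 1" "x \<ge> N + 11" "y \<ge> 2" using pell_prop[of N] xy by auto
    have "SP (2 * x^2)" unfolding SP_def using h(2) by (intro exI[of _ 2] exI[of _ x]) auto
    moreover have "SP (2 * x^2 + 1)" unfolding SP_def using h(1,3)
      by (intro exI[of _ 3] exI[of _ y]) auto
    moreover have "2 * x^2 > N"
    proof -
      have "x \<le> x^2" by (simp add: power2_eq_square)
      then show ?thesis using h(2) by linarith
    qed
    ultimately show ?thesis by auto
  qed
  then show ?thesis using infinite_nat_iff_unbounded by auto
qed

end
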